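(* Let $p>2$ be a prime, $n\ge1$, $A$ a finite abelian $p$-group (written additively) and $G$ a group containing $A$ as a normal subgroup with $G/A\cong\mathbb{Z}_{p^n}$, generated by the image of an element $t\in G$. Let $\psi:A\to A$ be $\psi(a)=t^{-1}at$. Suppose $[e]_\varphi$ is a subgroup of $G$ for every $\varphi\in{\rm Aut}\,G$. Then for every $a\in\Omega_1(A)$ one has $(\mathrm{id}+\psi+\psi^2+\dots+\psi^{p^n-1})(a)=0$; equivalently, the assignment $d(\bar t)=a$ extends to a derivation $d:G/A\to A$.
   Context: For an automorphism $\varphi$ of $G$, $[e]_\varphi=\{z^{-1}\varphi(z)\mid z\in G\}$. $\Omega_k(A)=\{a\in A\mid p^k a=0\}$. $G/A$ acts on the abelian normal subgroup $A$ by conjugation, $a^{\bar g}=g^{-1}ag$. A derivation $d:G/A\to A$ is a map with $d(h_1h_2)=d(h_1)+d(h_2)^{h_1}$ for all $h_1,h_2$; for a cyclic group $\langle \bar t\rangle$ of order $p^n$, a value $d(\bar t)=a$ extends to a derivation iff $(\mathrm{id}+\psi+\dots+\psi^{p^n-1})a=0$, in which case $d(\bar t^k)=(\mathrm{id}+\psi+\dots+\psi^{k-1})a$. *)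

theory Defs
  imports "HOL-Algebra.Algebra"
begin

definition twisted_class_e :: "('a, 'b) monoid_scheme \<Rightarrow> ('a \<Rightarrow> 'a) \<Rightarrow> 'a set" where
  "twisted_class_e G phi = {inv\<^bsub>G\<^esub> z \<otimes>\<^bsub>G\<^esub> phi z | z. z \<in> carrier G}"

definition conj_by :: "('a, 'b) monoid_scheme \<Rightarrow> 'a \<Rightarrow> 'a \<Rightarrow> 'a" where
  "conj_by G t a = inv\<^bsub>G\<^esub> t \<otimes>\<^bsub>G\<^esub> a \<otimes>\<^bsub>G\<^esub> t"

end

theory Submission
  imports Defs
begin

lemma periodic_int:
  fixes f :: "int \<Rightarrow> 'b" and m :: nat
  assumes per: "\<And>j. f (j + int m) = f j"
  shows "f (j + int m * c) = f j"
proof -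
  have nat: "f (j + int m * int c') = f j" for j c'
  proof (induction c' arbitrary: j)
    case 0 then show ?case by simp
  next
    case (Suc c')
    have "f (j + int m * int (Suc c')) = f ((j + int m * int c') + int m)"
      by (simp add: algebra_simps)
    also have "\<dots> = f j" using per Suc by simp
    finally show ?case .
  qed
  show ?thesis
  proof (cases "c \<ge> 0")
    case True
    then have "c = int (nat c)" by simp
    then obtain c' where "c = int c'" by blast
    then show ?thesis using nat by simp
  next
    case False
    then have "c = - int (nat (- c))" by simp
    then obtain c' where c: "c = - int c'" by blast
    have "f j = f ((j + int m * c) + int m * int c')" using c by simp
    also have "\<dots> = f (j + int m * c)" by (rule nat)
    finally show ?thesis by simp
  qed
qed

lemma (in comm_group) shift_prod_nat:
  assumes fc: "\<And>j. f j \<in> carrier G" and per: "\<And>j. f (j + int m) = f j"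
  shows "finprod G (\<lambda>i. f (int i + int s)) {..<m} = finprod G (\<lambda>i. f (int i)) {..<m}"
proof (induction s)
  case 0 then show ?case by simp
next
  case (Suc s)
  define g where "g = (\<lambda>i. f (int i + int s))"
  have gc: "g i \<in> carrier G" for i using fc g_def by simp
  have "finprod G (\<lambda>i. g (Suc i)) {..<m} = finprod G g {..<m}"
  proof (cases m)
    case 0 then show ?thesis by simp
  next
    case (Suc n)
    have gm: "g (Suc n) = g 0" using per[of "int s"] Suc by (simp add: g_def add.commute)
    have e1: "finprod G g {..Suc n} = finprod G (\<lambda>i. g (Suc i)) {..n} \<otimes> g 0"
      by (rule finprod_Suc2) (simp add: gc)
    have e2: "finprod G g {..Suc n} = g (Suc n) \<otimes> finprod G g {..n}"
      by (rule finprod_Suc) (simp add: gc)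
    have eq: "finprod G (\<lambda>i. g (Suc i)) {..n} \<otimes> g 0 = finprod G g {..n} \<otimes> g 0"
      using e1 e2 gm by (simp add: m_comm gc)
    then have "finprod G (\<lambda>i. g (Suc i)) {..n} = finprod G g {..n}"
    proof -
      have c1: "finprod G (\<lambda>i. g (Suc i)) {..n} \<in> carrier G" by (rule finprod_closed) (simp add: gc)
      have c2: "finprod G g {..n} \<in> carrier G" by (rule finprod_closed) (simp add: gc)
      show ?thesis by (rule r_cancel[OF eq c1 c2 gc[of 0]])
    qed
    then show ?thesis using Suc by (simp add: lessThan_Suc_atMost)
  qed
  then show ?case using Suc.IH by (simp add: g_def ac_simps)
qed

lemma (in comm_group) shift_prod:
  assumes fc: "\<And>j. f j \<in> carrier G" and per: "\<And>j. f (j + int m) = f j"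
  shows "finprod G (\<lambda>i. f (int i + s)) {..<m} = finprod G (\<lambda>i. f (int i)) {..<m}"
proof (cases "m = 0")
  case True then show ?thesis by simp
next
  case False
  have s: "s = int (nat (s mod int m)) + int m * (s div int m)"
    using False by simp
  have "f (int i + s) = f (int i + int (nat (s mod int m)))" for i
    using periodic_int[of f m "int i + int (nat (s mod int m))" "s div int m", OF per]
    by (subst s) (simp add: add.assoc)
  then have "finprod G (\<lambda>i. f (int i + s)) {..<m} = finprod G (\<lambda>i. f (int i + int (nat (s mod int m)))) {..<m}"
    by simp
  also have "\<dots> = finprod G (\<lambda>i. f (int i)) {..<m}"
    by (rule shift_prod_nat[of f m, OF fc per])
  finally show ?thesis .
qed

lemma (in comm_group) core:
  fixes x :: "int \<Rightarrow> 'a" and p m :: nat and k :: int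
  assumes xc: "\<And>j. x j \<in> carrier G"
    and xp: "\<And>j. x j [^] p = \<one>"
    and per: "\<And>j. x (j + int m) = x j"
    and rel: "\<And>i. x (i + k) = x (i + 1) \<otimes> x (i + 1) \<otimes> inv (x i)"
    and pr: "Factorial_Ring.prime p" and p2: "p > 2" and pm: "p dvd m"
  shows "finprod G (\<lambda>i. x (int i)) {..<m} = \<one>"
proof -
  have ordp: "ord (x j) dvd p" for j using xp pow_eq_id xc by blast
  have eqexp: "x j [^] a = x j [^] b" if "int p dvd a - b" for j and a b :: int
  proof -
    have "int (ord (x j)) dvd b - a"
      using ordp[of j] that by (metis dvd_minus_iff dvd_trans int_dvd_int_iff minus_diff_eq)
    then show ?thesis using int_pow_eq xc by blast
  qed
  define wp where "wp w = finprod G (\<lambda>i. x (int i) [^] (w (int i) :: int)) {..<m}" for w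
  have wpc: "wp w \<in> carrier G" for w unfolding wp_def by (simp add: xc Pi_def)
  have wp_cong: "wp w1 = wp w2" if "\<And>j. int p dvd w1 j - w2 j" for w1 w2
    unfolding wp_def
  proof (rule finprod_cong')
    show "{..<m} = {..<m}" by simp
  next
    show "(\<lambda>i. x (int i) [^] w2 (int i)) \<in> {..<m} \<rightarrow> carrier G" using xc by (simp add: Pi_def)
  next
    fix i show "x (int i) [^] w1 (int i) = x (int i) [^] w2 (int i)" by (rule eqexp) (rule that)
  qed
  have wp_add: "wp (\<lambda>j. a j + b j) = wp a \<otimes> wp b" for a b
    unfolding wp_def by (simp add: int_pow_mult xc Pi_def)
  have wp_diff: "wp (\<lambda>j. a j - b j) = \<one>" if "wp a = wp b" for a b
  proof -
    have "wp (\<lambda>j. (a j - b j) + b j) = wp (\<lambda>j. a j - b j) \<otimes> wp b" by (rule wp_add)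
    then have "wp (\<lambda>j. a j - b j) \<otimes> wp b = \<one> \<otimes> wp b" using that wpc by simp
    then show ?thesis using wpc by (metis r_cancel one_closed)
  qed
  have key: "wp (\<lambda>j. w (j - k)) = wp (\<lambda>j. 2 * w (j - 1) - w j)"
    if wper: "\<And>j. int p dvd w (j + int m) - w j" for w
  proof -
    define f1 where "f1 j = x j [^] w (j - k)" for j
    have f1c: "f1 j \<in> carrier G" for j by (simp add: f1_def xc)
    have f1p: "f1 (j + int m) = f1 j" for j
      unfolding f1_def per using eqexp wper[of "j - k"] by (simp add: algebra_simps)
    define f2 where "f2 j = x j [^] (2 * w (j - 1))" for j
    have f2c: "f2 j \<in> carrier G" for j by (simp add: f2_def xc)
    have f2p: "f2 (j + int m) = f2 j" for j
    proof -
      have "int p dvd 2 * w (j - 1 + int m) - 2 * w (j - 1)"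
        using wper[of "j - 1"] by (metis dvd_mult right_diff_distrib)
      then show ?thesis unfolding f2_def per using eqexp by (simp add: algebra_simps)
    qed
    have "wp (\<lambda>j. w (j - k)) = finprod G (\<lambda>i. f1 (int i)) {..<m}"
      unfolding wp_def f1_def by simp
    also have "\<dots> = finprod G (\<lambda>i. f1 (int i + k)) {..<m}"
      by (rule shift_prod[of f1 m, OF f1c f1p, symmetric])
    also have "\<dots> = finprod G (\<lambda>i. f2 (int i + 1) \<otimes> x (int i) [^] (- w (int i))) {..<m}"
    proof (rule finprod_cong')
      fix i assume "i \<in> {..<m}"
      let ?u = "x (int i + 1)" and ?v = "x (int i)" and ?e = "w (int i)"
      have "f1 (int i + k) = (?u \<otimes> ?u \<otimes> inv ?v) [^] ?e"
        unfolding f1_def rel by simp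
      also have "\<dots> = ?u [^] ?e \<otimes> ?u [^] ?e \<otimes> inv ?v [^] ?e"
        by (simp only: int_pow_distrib[OF m_closed[OF xc xc] inv_closed[OF xc]] int_pow_distrib[OF xc xc])
      also have "\<dots> = f2 (int i + 1) \<otimes> ?v [^] (- ?e)"
      proof -
        have e2: "2 * w (int i + 1 - 1) = ?e + ?e" by simp
        have a: "f2 (int i + 1) = ?u [^] ?e \<otimes> ?u [^] ?e"
          by (simp only: f2_def e2 int_pow_mult[OF xc])
        have b: "inv ?v [^] ?e = ?v [^] (- ?e)" by (simp add: int_pow_inv int_pow_neg xc)
        show ?thesis using a b by simp
      qed
      finally show "f1 (int i + k) = f2 (int i + 1) \<otimes> ?v [^] (- ?e)" .
    next
      show "{..<m} = {..<m}" by simp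
    next
      show "(\<lambda>i. f2 (int i + 1) \<otimes> x (int i) [^] (- w (int i))) \<in> {..<m} \<rightarrow> carrier G"
        using f2c xc by (simp add: Pi_def)
    qed
    also have "\<dots> = finprod G (\<lambda>i. f2 (int i + 1)) {..<m} \<otimes> wp (\<lambda>j. - w j)"
      unfolding wp_def by (simp add: Pi_def f2c xc)
    also have "finprod G (\<lambda>i. f2 (int i + 1)) {..<m} = finprod G (\<lambda>i. f2 (int i)) {..<m}"
      by (rule shift_prod[of f2 m, OF f2c f2p])
    also have "finprod G (\<lambda>i. f2 (int i)) {..<m} = wp (\<lambda>j. 2 * w (j - 1))"
      unfolding wp_def f2_def by simp
    also have "wp (\<lambda>j. 2 * w (j - 1)) \<otimes> wp (\<lambda>j. - w j) = wp (\<lambda>j. 2 * w (j - 1) - w j)"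
      using wp_add[of "\<lambda>j. 2 * w (j - 1)" "\<lambda>j. - w j"] by simp
    finally show ?thesis .
  qed
  have inverse: "wp (\<lambda>j. 1) = \<one>" if e1: "wp (\<lambda>j. e) = \<one>" and ndvd: "\<not> int p dvd e" for e
  proof -
    have "coprime (int p) e" using pr ndvd by (simp add: prime_imp_coprime)
    then obtain u v where uv: "u * e + v * int p = 1" using bezout_int[of e "int p"]
      by (metis coprime_imp_gcd_eq_1 gcd.commute mult.commute)
    define u' where "u' = nat (u mod int p)"
    have pos: "p > 0" using p2 by simp
    have u'e: "int p dvd int u' * e - 1"
    proof -
      have "int u' = u mod int p" using pos u'_def by simp
      then have "int u' * e - 1 = (u mod int p - u) * e - v * int p" using uv by (simp add: algebra_simps)
      moreover have "int p dvd (u mod int p - u)" by (metis mod_mod_trivial mod_eq_dvd_iff)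
      ultimately show ?thesis by simp
    qed
    have pw: "wp (\<lambda>j. int c * e) = \<one>" for c
    proof (induction c)
      case 0 then show ?case unfolding wp_def by simp
    next
      case (Suc c)
      have "wp (\<lambda>j. int (Suc c) * e) = wp (\<lambda>j. int c * e + e)" by (simp add: algebra_simps)
      also have "\<dots> = \<one>" using wp_add[of "\<lambda>j. int c * e" "\<lambda>j. e"] Suc e1 by simp
      finally show ?case .
    qed
    have "wp (\<lambda>j. 1) = wp (\<lambda>j. int u' * e)"
      by (rule wp_cong) (metis u'e dvd_minus_iff minus_diff_eq)
    then show ?thesis using pw by simp
  qed
  have r1: "wp (\<lambda>j. 2 - k) = \<one>"
  proof -
    have h: "wp (\<lambda>j. j - k) = wp (\<lambda>j. 2 * (j - 1) - j)"
      by (rule key[of "\<lambda>j. j"]) (simp add: pm)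
    have "wp (\<lambda>j. (j - k) - (2 * (j - 1) - j)) = \<one>" by (rule wp_diff[OF h])
    moreover have "(\<lambda>j. (j - k) - (2 * (j - 1) - j)) = (\<lambda>j. 2 - k)" by (rule ext) (simp add: algebra_simps)
    ultimately show ?thesis by simp
  qed
  have r2: "wp (\<lambda>j. (4 - 2 * k) * j + (k * k + k - 4)) = \<one>"
  proof -
    have per2: "int p dvd (j + int m) * (j + int m - 1) - j * (j - 1)" for j
    proof -
      have "(j + int m) * (j + int m - 1) - j * (j - 1) = int m * (2 * j + int m - 1)"
        by (simp add: algebra_simps)
      then show ?thesis using pm by simp
    qed
    have h: "wp (\<lambda>j. (j - k) * (j - k - 1)) = wp (\<lambda>j. 2 * ((j - 1) * (j - 1 - 1)) - j * (j - 1))"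
      by (rule key[of "\<lambda>j. j * (j - 1)"]) (rule per2)
    have "wp (\<lambda>j. (j - k) * (j - k - 1) - (2 * ((j - 1) * (j - 1 - 1)) - j * (j - 1))) = \<one>"
      by (rule wp_diff[OF h])
    moreover have "(\<lambda>j. (j - k) * (j - k - 1) - (2 * ((j - 1) * (j - 1 - 1)) - j * (j - 1)))
        = (\<lambda>j. (4 - 2 * k) * j + (k * k + k - 4))"
      by (rule ext) (simp add: algebra_simps)
    ultimately show ?thesis by simp
  qed
  have "wp (\<lambda>j. 1) = \<one>"
  proof (cases "int p dvd 2 - k")
    case False
    then show ?thesis using inverse r1 by blast
  next
    case True
    have "wp (\<lambda>j. 2) = wp (\<lambda>j. (4 - 2 * k) * j + (k * k + k - 4))"
    proof (rule wp_cong)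
      fix j
      have "(2::int) - ((4 - 2 * k) * j + (k * k + k - 4)) = (2 - k) * (k + 3 - 2 * j)"
        by (simp add: algebra_simps)
      then show "int p dvd 2 - ((4 - 2 * k) * j + (k * k + k - 4))" using True by simp
    qed
    then have "wp (\<lambda>j. 2) = \<one>" using r2 by simp
    moreover have "\<not> int p dvd 2" using p2 by (auto dest: zdvd_imp_le)
    ultimately show ?thesis using inverse by blast
  qed
  then show ?thesis unfolding wp_def by (simp add: xc)
qed

lemma (in group) cancel_l [simp]:
  "x \<in> carrier G \<Longrightarrow> w \<in> carrier G \<Longrightarrow> x \<otimes> (inv x \<otimes> w) = w"
  by (simp add: m_assoc[symmetric])

lemma (in group) cancel_l' [simp]:
  "x \<in> carrier G \<Longrightarrow> w \<in> carrier G \<Longrightarrow> inv x \<otimes> (x \<otimes> w) = w"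
  by (simp add: m_assoc[symmetric])

lemma (in group) conj_pow:
  assumes "g \<in> carrier G" "y \<in> carrier G"
  shows "(inv g \<otimes> y \<otimes> g) [^] (n::nat) = inv g \<otimes> y [^] n \<otimes> g"
proof (induction n)
  case 0 then show ?case using assms by (simp add: m_assoc)
next
  case (Suc n)
  then show ?case using assms by (simp add: m_assoc)
qed

theorem mainTheorem10:
  fixes G (structure) and A :: "'a set" and t :: 'a and p n :: nat
  assumes "Factorial_Ring.prime p" and "p > 2" and "n \<ge> 1"
    and "group G"
    and "A \<lhd> G"
    and "finite A"
    and "\<exists>m. card A = p ^ m"
    and "\<forall>x\<in>A. \<forall>y\<in>A. x \<otimes> y = y \<otimes> x"
    and "t \<in> carrier G"
    and "order (G Mod A) = p ^ n"
    and "carrier (G Mod A) = generate (G Mod A) {A #> t}"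
    and "\<forall>\<phi>\<in>iso G G. subgroup (twisted_class_e G \<phi>) G"
  shows "\<forall>a\<in>A. a [^] p = \<one> \<longrightarrow>
           finprod (G\<lparr>carrier := A\<rparr>) (\<lambda>k. (conj_by G t ^^ k) a) {..<p ^ n} = \<one>"
proof (intro ballI impI)
  fix a assume aA: "a \<in> A" and ap: "a [^] p = \<one>"
  interpret group G by fact
  interpret N: normal A G by fact
  have sgA: "subgroup A G" by (rule N.subgroup_axioms)
  have Asub: "A \<subseteq> carrier G" by (rule N.subset)
  have comm: "\<And>x y. x \<in> A \<Longrightarrow> y \<in> A \<Longrightarrow> x \<otimes> y = y \<otimes> x" using assms(8) by blast
  define H where "H = G\<lparr>carrier := A\<rparr>"
  have cH: "comm_group H"
    unfolding H_def
    by (rule group.group_comm_groupI[OF subgroup_imp_group[OF sgA]]) (simp add: comm)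
  have tc: "t \<in> carrier G" by fact
  have ac: "a \<in> carrier G" using aA Asub by blast
  define m where "m = p ^ n"
  interpret Q: group "G Mod A" by (rule N.factorgroup_is_group)
  have finQ: "finite (carrier (G Mod A))"
  proof (rule card_ge_0_finite)
    show "card (carrier (G Mod A)) > 0" using assms(10) assms(2) unfolding order_def by simp
  qed
  have tQ: "A #> t \<in> carrier (G Mod A)"
    using assms(11) by (simp add: generate.incl)
  have hom: "(\<lambda>x. A #> x) \<in> hom G (G Mod A)" by (rule N.r_coset_hom_Mod)
  have tmA: "t [^] m \<in> A"
  proof -
    have "(A #> t) [^]\<^bsub>G Mod A\<^esub> order (G Mod A) = \<one>\<^bsub>G Mod A\<^esub>"
      using Q.pow_order_eq_1[OF tQ] by simp
    then have "A #> (t [^] m) = A"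
      using hom_nat_pow[OF hom tc group_axioms Q.is_group] assms(10) m_def by simp
    moreover have "t [^] m \<in> A #> (t [^] m)" by (rule rcos_self) (simp_all add: tc sgA)
    ultimately show ?thesis by simp
  qed
  have decomp: "\<exists>k::int. \<exists>b\<in>A. z = b \<otimes> t [^] k" if zc: "z \<in> carrier G" for z
  proof -
    have "A #> z \<in> carrier (G Mod A)" using hom zc by (auto simp: hom_def Pi_def)
    then have "A #> z \<in> generate (G Mod A) {A #> t}" using assms(11) by simp
    then obtain k :: int where k: "A #> z = (A #> t) [^]\<^bsub>G Mod A\<^esub> k"
      using Q.generate_pow[OF tQ] by blast
    then have "A #> z = A #> (t [^] k)"
      using hom_int_pow[OF hom tc group_axioms Q.is_group] by simp
    moreover have "z \<in> A #> z" by (rule rcos_self) (simp_all add: zc sgA)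
    ultimately have "z \<in> A #> (t [^] k)" by simp
    then show ?thesis unfolding r_coset_def by blast
  qed
  define x where "x j = inv (t [^] j) \<otimes> a \<otimes> t [^] j" for j :: int
  have xA: "x j \<in> A" for j unfolding x_def by (rule N.inv_op_closed1) (simp_all add: tc aA)
  have xc: "x j \<in> carrier G" for j using xA Asub by blast
  have x0: "x 0 = a" unfolding x_def using ac by simp
  have xshift: "x (i + j) = inv (t [^] i) \<otimes> x j \<otimes> t [^] i" for i j
  proof -
    have "t [^] (i + j) = t [^] j \<otimes> t [^] i" using int_pow_mult[OF tc, of j i] by (simp add: add.commute)
    then show ?thesis unfolding x_def using tc ac by (simp add: inv_mult_group m_assoc)
  qed
  define C where "C i y = inv (t [^] i) \<otimes> y \<otimes> t [^] i" for i :: int and y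
  have Cmult: "C i (u \<otimes> v) = C i u \<otimes> C i v" if "u \<in> carrier G" "v \<in> carrier G" for i u v
    unfolding C_def using that tc by (simp add: m_assoc)
  have Cinv: "C i (inv u) = inv (C i u)" if "u \<in> carrier G" for i u
    unfolding C_def using that tc by (simp add: inv_mult_group m_assoc)
  have xp: "x j [^] p = \<one>" for j
    unfolding x_def using conj_pow[of "t [^] j" a p] tc ac ap by simp
  have xper: "x (j + int m) = x j" for j
  proof -
    have "x (j + int m) = x (int m + j)" by (simp add: add.commute)
    also have "\<dots> = inv (t [^] m) \<otimes> x j \<otimes> t [^] m"
      using xshift[of "int m" j] by (simp add: int_pow_int)
    also have "\<dots> = inv (t [^] m) \<otimes> (x j \<otimes> t [^] m)"
      using tmA Asub xc by (simp add: m_assoc subsetD)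
    also have "\<dots> = inv (t [^] m) \<otimes> (t [^] m \<otimes> x j)"
      using comm[OF xA[of j] tmA] by simp
    also have "\<dots> = x j" using tmA Asub xc by (simp add: subsetD)
    finally show ?thesis .
  qed
  define \<phi> where "\<phi> z = a \<otimes> z \<otimes> inv a" for z
  have phiiso: "\<phi> \<in> iso G G"
  proof -
    have "\<phi> \<in> hom G G" unfolding hom_def \<phi>_def using ac by (auto simp: m_assoc)
    moreover have "bij_betw \<phi> (carrier G) (carrier G)"
    proof (rule bij_betwI[where g = "\<lambda>z. inv a \<otimes> z \<otimes> a"])
      show "\<phi> \<in> carrier G \<rightarrow> carrier G" unfolding \<phi>_def using ac by auto
      show "(\<lambda>z. inv a \<otimes> z \<otimes> a) \<in> carrier G \<rightarrow> carrier G" using ac by auto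
      show "inv a \<otimes> \<phi> z \<otimes> a = z" if "z \<in> carrier G" for z
        unfolding \<phi>_def using ac that by (simp add: m_assoc)
      show "\<phi> (inv a \<otimes> z \<otimes> a) = z" if "z \<in> carrier G" for z
        unfolding \<phi>_def using ac that by (simp add: m_assoc)
    qed
    ultimately show ?thesis unfolding iso_def by simp
  qed
  define S where "S = twisted_class_e G \<phi>"
  have sgS: "subgroup S G" using assms(12) phiiso S_def by blast
  have tw: "inv z \<otimes> \<phi> z = x k \<otimes> inv a" if "z = b \<otimes> t [^] k" "b \<in> A" for z b k
  proof -
    have bc: "b \<in> carrier G" using that Asub by blast
    have "inv z \<otimes> \<phi> z = inv (t [^] k) \<otimes> (inv b \<otimes> a \<otimes> b) \<otimes> t [^] k \<otimes> inv a"
      unfolding that \<phi>_def using bc ac tc by (simp add: inv_mult_group m_assoc)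
    also have "inv b \<otimes> a \<otimes> b = a" using comm[OF aA that(2)] bc ac by (simp add: m_assoc)
    finally show ?thesis unfolding x_def .
  qed
  define c where "c = x 1 \<otimes> inv a"
  have cS: "c \<in> S"
  proof -
    have "inv t \<otimes> \<phi> t = x 1 \<otimes> inv a" using tw[of t "\<one>" 1] tc sgA
      by (simp add: subgroup.one_closed)
    then have "x 1 \<otimes> inv a \<in> {inv z \<otimes> \<phi> z |z. z \<in> carrier G}"
      using tc by (intro CollectI exI[of _ t]) simp
    then show ?thesis unfolding S_def twisted_class_e_def c_def .
  qed
  have "c \<otimes> c \<in> S" using cS sgS by (simp add: subgroup.m_closed)
  then obtain z where zc: "z \<in> carrier G" and zeq: "c \<otimes> c = inv z \<otimes> \<phi> z"
    unfolding S_def twisted_class_e_def by blast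
  obtain k b where b: "b \<in> A" and zk: "z = b \<otimes> t [^] (k::int)" using decomp[OF zc] by blast
  have cc: "c \<otimes> c = x k \<otimes> inv a" using zeq tw[OF zk b] by simp
  have relk: "x k = x 1 \<otimes> x 1 \<otimes> inv a"
  proof -
    have "x k = (c \<otimes> c) \<otimes> a" using cc xc ac by (simp add: m_assoc)
    also have "\<dots> = x 1 \<otimes> x 1 \<otimes> inv a"
    proof -
      have ia: "inv a \<in> A" using aA sgA by (simp add: subgroup.m_inv_closed)
      have "x 1 \<otimes> inv a \<otimes> (x 1 \<otimes> inv a) \<otimes> a = x 1 \<otimes> (inv a \<otimes> x 1) \<otimes> (inv a \<otimes> a)"
        using xc ac by (simp add: m_assoc)
      also have "\<dots> = x 1 \<otimes> (x 1 \<otimes> inv a)" using comm[OF ia xA[of 1]] xc ac by (simp add: m_assoc)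
      finally show ?thesis unfolding c_def using xc ac by (simp add: m_assoc)
    qed
    finally show ?thesis .
  qed
  have rel: "x (i + k) = x (i + 1) \<otimes> x (i + 1) \<otimes> inv (x i)" for i
  proof -
    have "x (i + k) = C i (x k)" using xshift unfolding C_def by simp
    also have "\<dots> = C i (x 1) \<otimes> C i (x 1) \<otimes> inv (C i a)"
      unfolding relk using xc ac by (simp add: Cmult Cinv)
    also have "C i (x 1) = x (i + 1)" using xshift unfolding C_def by simp
    also have "C i a = x i" using xshift[of i 0] x0 unfolding C_def by simp
    finally show ?thesis .
  qed
  have HxC: "x j \<in> carrier H" for j using xA H_def by simp
  have core: "finprod H (\<lambda>i. x (int i)) {..<m} = \<one>\<^bsub>H\<^esub>"
  proof (rule comm_group.core[OF cH, of x p m k])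
    show "x j \<in> carrier H" for j by (rule HxC)
    show "x j [^]\<^bsub>H\<^esub> p = \<one>\<^bsub>H\<^esub>" for j
      using xp[of j] nat_pow_consistent[of "x j" p A] unfolding H_def by simp
    show "x (j + int m) = x j" for j by (rule xper)
    show "x (i + k) = x (i + 1) \<otimes>\<^bsub>H\<^esub> x (i + 1) \<otimes>\<^bsub>H\<^esub> inv\<^bsub>H\<^esub> x i" for i
      using rel[of i] m_inv_consistent[OF sgA xA[of i]] unfolding H_def by simp
    show "Factorial_Ring.prime p" by fact
    show "p > 2" by fact
    show "p dvd m" unfolding m_def using assms(3) by (simp add: dvd_power)
  qed
  have cp: "(conj_by G t ^^ j) a = x (int j)" for j
  proof (induction j)
    case 0 then show ?case using x0 by simp
  next
    case (Suc j)
    have "x (int (Suc j)) = x (1 + int j)" by simp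
    also have "\<dots> = inv t \<otimes> x (int j) \<otimes> t" using xshift[of 1 "int j"] tc by simp
    finally show ?case using Suc by (simp add: conj_by_def)
  qed
  show "finprod (G\<lparr>carrier := A\<rparr>) (\<lambda>k. (conj_by G t ^^ k) a) {..<p ^ n} = \<one>"
    using core unfolding cp H_def m_def by simp
qed

end
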